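(* Let $(E,(\cdot,\cdot),\mathcal H)$ be an extended affine Lie algebra with root system $R$. Then $E$ is tame if and only if for each $\sigma\in R^0$, $$E_\sigma\cap E_c^\perp=Z(E_c)\cap\sum_{\alpha\in R^\times}[E_{\alpha+\sigma},E_{-\alpha}].$$
   Context: All Lie algebras are over $\mathbb C$. An extended affine Lie algebra (EALA) is a triple $(E,(\cdot,\cdot),\mathcal H)$ where $E$ is a Lie algebra, $\mathcal H$ a subalgebra and $(\cdot,\cdot)$ a bilinear form on $E$ such that: (EA1) the form is symmetric, non-degenerate and invariant; (EA2) $\mathcal H$ is finite-dimensional, $E=\bigoplus_{\alpha\in\mathcal H^*}E_\alpha$ with $E_\alpha=\{x:[h,x]=\alpha(h)x\ \forall h\in\mathcal H\}$ and $E_0=\mathcal H$; the root system is $R=\{\alpha:E_\alpha\neq0\}$ (with $E_\beta=0$ for $\beta\notin R$); $t_\alpha\in\mathcal H$ is given by $\alpha(h)=(h,t_\alpha)$, $(\alpha,\beta):=(t_\alpha,t_\beta)$, $R^\times=\{\alpha\in R:(\alpha,\alpha)\neq0\}$, $R^0=R\setminus R^\times$; (EA3) $\mathrm{ad}\,x$ is locally nilpotent for $x\in E_\alpha$, $\alpha\in R^\times$; (EA4) $R$ is discrete; (EA5) $R^\times$ is connected (not a union of two nonempty mutually orthogonal subsets) and every isotropic root is non-isolated. Root systems are assumed reduced. The core $E_c$ is the subalgebra generated by the $E_\alpha$, $\alpha\in R^\times$; $E_c^\perp$ is its orthogonal complement in $E$ and $Z(E_c)$ its center. $E$ is tame if $E_c^\perp=Z(E_c)$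 (equivalently $E_c^\perp\subseteq Z(E_c)$). *)

theory Defs
  imports Complex_Main
begin

definition lie_algebra :: "(complex \<Rightarrow> 'a::ab_group_add \<Rightarrow> 'a) \<Rightarrow> ('a \<Rightarrow> 'a \<Rightarrow> 'a) \<Rightarrow> bool" where
  "lie_algebra smul br \<longleftrightarrow>
     vector_space smul \<and>
     (\<forall>x y z. br (x + y) z = br x z + br y z) \<and>
     (\<forall>x y z. br x (y + z) = br x y + br x z) \<and>
     (\<forall>a x y. br (smul a x) y = smul a (br x y)) \<and>
     (\<forall>a x y. br x (smul a y) = smul a (br x y)) \<and>
     (\<forall>x. br x x = 0) \<and>
     (\<forall>x y z. br x (br y z) + br y (br z x) + br z (br x y) = 0)"

definition subalgebra :: "(complex \<Rightarrow> 'a::ab_group_add \<Rightarrow> 'a) \<Rightarrow> ('a \<Rightarrow> 'a \<Rightarrow> 'a) \<Rightarrow> 'a set \<Rightarrow> bool" where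
  "subalgebra smul br S \<longleftrightarrow> module.subspace smul S \<and> (\<forall>x\<in>S. \<forall>y\<in>S. br x y \<in> S)"

definition good_form :: "(complex \<Rightarrow> 'a::ab_group_add \<Rightarrow> 'a) \<Rightarrow> ('a \<Rightarrow> 'a \<Rightarrow> 'a) \<Rightarrow> ('a \<Rightarrow> 'a \<Rightarrow> complex) \<Rightarrow> bool" where
  "good_form smul br B \<longleftrightarrow>
     (\<forall>x y z. B (x + y) z = B x z + B y z) \<and>
     (\<forall>a x y. B (smul a x) y = a * B x y) \<and>
     (\<forall>x y. B x y = B y x) \<and>
     (\<forall>x. (\<forall>y. B x y = 0) \<longrightarrow> x = 0) \<and>
     (\<forall>x y z. B (br x y) z = B x (br y z))"

text \<open>The dual space of H: linear functionals on H, represented as functions on 'a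
that are linear on H and vanish outside H (so that each functional has a unique
representative).\<close>
definition hdual :: "(complex \<Rightarrow> 'a::ab_group_add \<Rightarrow> 'a) \<Rightarrow> 'a set \<Rightarrow> ('a \<Rightarrow> complex) set" where
  "hdual smul H = {\<alpha>. (\<forall>h\<in>H. \<forall>k\<in>H. \<forall>a b. \<alpha> (smul a h + smul b k) = a * \<alpha> h + b * \<alpha> k)
                      \<and> (\<forall>x. x \<notin> H \<longrightarrow> \<alpha> x = 0)}"

definition rootsp :: "(complex \<Rightarrow> 'a::ab_group_add \<Rightarrow> 'a) \<Rightarrow> ('a \<Rightarrow> 'a \<Rightarrow> 'a) \<Rightarrow> 'a set \<Rightarrow> ('a \<Rightarrow> complex) \<Rightarrow> 'a set" where
  "rootsp smul br H \<alpha> = {x. \<forall>h\<in>H. br h x = smul (\<alpha> h) x}"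

definition roots :: "(complex \<Rightarrow> 'a::ab_group_add \<Rightarrow> 'a) \<Rightarrow> ('a \<Rightarrow> 'a \<Rightarrow> 'a) \<Rightarrow> 'a set \<Rightarrow> ('a \<Rightarrow> complex) set" where
  "roots smul br H = {\<alpha> \<in> hdual smul H. rootsp smul br H \<alpha> \<noteq> {0}}"

definition tvec :: "('a \<Rightarrow> 'a \<Rightarrow> complex) \<Rightarrow> 'a set \<Rightarrow> ('a \<Rightarrow> complex) \<Rightarrow> 'a" where
  "tvec B H \<alpha> = (THE t. t \<in> H \<and> (\<forall>h\<in>H. \<alpha> h = B h t))"

definition rform :: "('a \<Rightarrow> 'a \<Rightarrow> complex) \<Rightarrow> 'a set \<Rightarrow> ('a \<Rightarrow> complex) \<Rightarrow> ('a \<Rightarrow> complex) \<Rightarrow> complex" where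
  "rform B H \<alpha> \<beta> = B (tvec B H \<alpha>) (tvec B H \<beta>)"

definition roots_nonisotropic where
  "roots_nonisotropic smul br B H = {\<alpha> \<in> roots smul br H. rform B H \<alpha> \<alpha> \<noteq> 0}"

definition roots_isotropic where
  "roots_isotropic smul br B H = roots smul br H - roots_nonisotropic smul br B H"

definition eala :: "(complex \<Rightarrow> 'a::ab_group_add \<Rightarrow> 'a) \<Rightarrow> ('a \<Rightarrow> 'a \<Rightarrow> 'a) \<Rightarrow> ('a \<Rightarrow> 'a \<Rightarrow> complex) \<Rightarrow> 'a set \<Rightarrow> bool" where
  "eala smul br B H \<longleftrightarrow>
     lie_algebra smul br \<and>
     \<comment> \<open>EA1\<close>
     good_form smul br B \<and>
     \<comment> \<open>EA2\<close>
     subalgebra smul br H \<and>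
     (\<exists>F. finite F \<and> F \<subseteq> H \<and> module.span smul F = H) \<and>
     (\<forall>x. \<exists>F f. finite F \<and> F \<subseteq> hdual smul H \<and> (\<forall>\<alpha>\<in>F. f \<alpha> \<in> rootsp smul br H \<alpha>) \<and> x = sum f F) \<and>
     (\<forall>F f. finite F \<and> F \<subseteq> hdual smul H \<and> (\<forall>\<alpha>\<in>F. f \<alpha> \<in> rootsp smul br H \<alpha>) \<and> sum f F = 0
        \<longrightarrow> (\<forall>\<alpha>\<in>F. f \<alpha> = 0)) \<and>
     rootsp smul br H (\<lambda>_. 0) = H \<and>
     \<comment> \<open>EA3\<close>
     (\<forall>\<alpha>\<in>roots_nonisotropic smul br B H. \<forall>x\<in>rootsp smul br H \<alpha>. \<forall>y. \<exists>n. (br x ^^ n) y = 0) \<and>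
     \<comment> \<open>EA4: R is discrete in H^* (topology of H^* = weak topology of evaluations)\<close>
     (\<forall>\<alpha>\<in>roots smul br H. \<exists>F \<epsilon>. finite F \<and> F \<subseteq> H \<and> \<epsilon> > 0 \<and>
        (\<forall>\<beta>\<in>roots smul br H. \<beta> \<noteq> \<alpha> \<longrightarrow> (\<exists>h\<in>F. \<epsilon> \<le> cmod (\<beta> h - \<alpha> h)))) \<and>
     \<comment> \<open>EA5(a): R^x connected\<close>
     \<not> (\<exists>P Q. P \<noteq> {} \<and> Q \<noteq> {} \<and> P \<union> Q = roots_nonisotropic smul br B H \<and>
            (\<forall>\<alpha>\<in>P. \<forall>\<beta>\<in>Q. rform B H \<alpha> \<beta> = 0)) \<and>
     \<comment> \<open>EA5(b): isotropic roots are non-isolated\<close>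
     (\<forall>\<delta>\<in>roots_isotropic smul br B H. \<exists>\<alpha>\<in>roots_nonisotropic smul br B H.
        (\<lambda>h. \<alpha> h + \<delta> h) \<in> roots smul br H) \<and>
     \<comment> \<open>reduced root system\<close>
     (\<forall>\<alpha>\<in>roots_nonisotropic smul br B H. (\<lambda>h. 2 * \<alpha> h) \<notin> roots smul br H)"

definition core where
  "core smul br B H = \<Inter>{S. subalgebra smul br S \<and>
      (\<Union>\<alpha>\<in>roots_nonisotropic smul br B H. rootsp smul br H \<alpha>) \<subseteq> S}"

definition orth :: "('a \<Rightarrow> 'a \<Rightarrow> complex) \<Rightarrow> 'a set \<Rightarrow> 'a set" where
  "orth B S = {x. \<forall>y\<in>S. B x y = 0}"

definition centre :: "('a \<Rightarrow> 'a \<Rightarrow> 'a::zero) \<Rightarrow> 'a set \<Rightarrow> 'a set" where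
  "centre br S = {x\<in>S. \<forall>y\<in>S. br x y = 0}"

definition tame where
  "tame smul br B H \<longleftrightarrow> orth B (core smul br B H) = centre br (core smul br B H)"

definition brsp where
  "brsp smul br A C = module.span smul {br x y | x y. x \<in> A \<and> y \<in> C}"

end

theory Submission
  imports Defs
begin

locale EA =
  fixes smul :: "complex \<Rightarrow> 'a::ab_group_add \<Rightarrow> 'a"
    and br :: "'a \<Rightarrow> 'a \<Rightarrow> 'a"
    and B :: "'a \<Rightarrow> 'a \<Rightarrow> complex"
    and H :: "'a set"
  assumes ea: "eala smul br B H"
begin

lemma la: "lie_algebra smul br" using ea unfolding eala_def by (elim conjE) assumption
lemma vs: "vector_space smul" using la unfolding lie_algebra_def by blast

interpretation V: module smul using vs by (simp add: module_iff_vector_space)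

abbreviation E where "E \<alpha> \<equiv> rootsp smul br H \<alpha>"
abbreviation Rx where "Rx \<equiv> roots_nonisotropic smul br B H"
abbreviation R0 where "R0 \<equiv> roots_isotropic smul br B H"
abbreviation R where "R \<equiv> roots smul br H"
abbreviation D where "D \<equiv> hdual smul H"
abbreviation C where "C \<equiv> core smul br B H"

lemma br_addl: "br (x + y) z = br x z + br y z" using la unfolding lie_algebra_def by blast
lemma br_addr: "br x (y + z) = br x y + br x z" using la unfolding lie_algebra_def by blast
lemma br_sl: "br (smul a x) y = smul a (br x y)" using la unfolding lie_algebra_def by blast
lemma br_sr: "br x (smul a y) = smul a (br x y)" using la unfolding lie_algebra_def by blast
lemma br_xx: "br x x = 0" using la unfolding lie_algebra_def by blast
lemma jac: "br x (br y z) + br y (br z x) + br z (br x y) = 0" using la unfolding lie_algebra_def by blast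

lemma br_0l[simp]: "br 0 x = 0" using br_addl[of 0 0 x] by simp
lemma br_0r[simp]: "br x 0 = 0" using br_addr[of x 0 0] by simp
lemma br_negl: "br (- x) y = - br x y" using br_addl[of x "-x" y] by (metis minus_unique add.right_inverse br_0l)
lemma br_negr: "br x (- y) = - br x y" using br_addr[of x y "-y"] by (metis minus_unique add.right_inverse br_0r)
lemma br_anti: "br x y = - br y x"
proof -
  have "br (x+y) (x+y) = br x x + br x y + (br y x + br y y)" by (simp only: br_addl br_addr add_ac)
  hence "br x y + br y x = br (x+y) (x+y)" by (simp add: br_xx)
  hence "br x y + br y x = 0" using br_xx[of "x+y"] by metis
  thus ?thesis by (simp add: eq_neg_iff_add_eq_0)
qed

lemma gf: "good_form smul br B" using ea unfolding eala_def by (elim conjE) assumption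
lemma B_addl: "B (x + y) z = B x z + B y z" using gf unfolding good_form_def by blast
lemma B_sl: "B (smul a x) y = a * B x y" using gf unfolding good_form_def by blast
lemma B_sym: "B x y = B y x" using gf unfolding good_form_def by blast
lemma B_nd: "(\<And>y. B x y = 0) \<Longrightarrow> x = 0" using gf unfolding good_form_def by blast
lemma B_inv: "B (br x y) z = B x (br y z)" using gf unfolding good_form_def by blast
lemma B_addr: "B x (y + z) = B x y + B x z"
  using B_addl[of y z x] B_sym[of x "y+z"] B_sym[of x y] B_sym[of x z] by simp
lemma B_sr: "B x (smul a y) = a * B x y"
  using B_sl[of a y x] B_sym[of x "smul a y"] B_sym[of x y] by simp
lemma B_0l[simp]: "B 0 x = 0" using B_addl[of 0 0 x] by simp
lemma B_0r[simp]: "B x 0 = 0" using B_sym[of x 0] by simp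
lemma B_negl: "B (- x) y = - B x y" using B_addl[of x "-x" y] by (metis minus_unique add.right_inverse B_0l)
lemma B_negr: "B x (- y) = - B x y" using B_negl[of y x] B_sym[of x "-y"] B_sym[of x y] by simp
lemma B_suml: "B (sum f F) y = (\<Sum>a\<in>F. B (f a) y)"
  by (induct F rule: infinite_finite_induct) (auto simp: B_addl)
lemma B_sumr: "B y (sum f F) = (\<Sum>a\<in>F. B y (f a))"
  using B_suml[of f F y] B_sym[of y] by simp

lemma subalg_H: "subalgebra smul br H" using ea unfolding eala_def by (elim conjE) assumption
lemma decomp_all: "\<forall>x. \<exists>F f. finite F \<and> F \<subseteq> D \<and> (\<forall>\<alpha>\<in>F. f \<alpha> \<in> E \<alpha>) \<and> x = sum f F"
  using ea unfolding eala_def by (elim conjE) assumption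
lemma decomp: "\<exists>F f. finite F \<and> F \<subseteq> D \<and> (\<forall>\<alpha>\<in>F. f \<alpha> \<in> E \<alpha>) \<and> x = sum f F"
  using decomp_all by blast
lemma decompE:
  obtains F f where "finite F" "F \<subseteq> D" "\<forall>\<alpha>\<in>F. f \<alpha> \<in> E \<alpha>" "x = sum f F"
proof -
  from decomp[of x] obtain F f where "finite F \<and> F \<subseteq> D \<and> (\<forall>\<alpha>\<in>F. f \<alpha> \<in> E \<alpha>) \<and> x = sum f F"
    by (elim exE)
  thus ?thesis using that by (elim conjE)
qed
lemma indep_all: "\<forall>F f. finite F \<and> F \<subseteq> D \<and> (\<forall>\<alpha>\<in>F. f \<alpha> \<in> E \<alpha>) \<and> sum f F = 0
        \<longrightarrow> (\<forall>\<alpha>\<in>F. f \<alpha> = 0)"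
  using ea unfolding eala_def by (elim conjE) assumption
lemma indep: "finite F \<Longrightarrow> F \<subseteq> D \<Longrightarrow> (\<forall>\<alpha>\<in>F. f \<alpha> \<in> E \<alpha>) \<Longrightarrow> sum f F = 0 \<Longrightarrow> \<alpha>\<in>F \<Longrightarrow> f \<alpha> = 0"
  using indep_all by blast
lemma E0: "E (\<lambda>_. 0) = H" using ea unfolding eala_def by (elim conjE) assumption

lemma E_sub: "V.subspace (E \<alpha>)"
  unfolding V.subspace_def
proof (intro conjI ballI allI)
  show "0 \<in> E \<alpha>" unfolding rootsp_def by simp
next
  fix x y assume "x \<in> E \<alpha>" "y \<in> E \<alpha>"
  thus "x + y \<in> E \<alpha>" unfolding rootsp_def by (simp add: br_addr V.scale_right_distrib)
next
  fix c x assume x: "x \<in> E \<alpha>"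
  have "br h (smul c x) = smul (\<alpha> h) (smul c x)" if "h \<in> H" for h
  proof -
    have "br h (smul c x) = smul c (smul (\<alpha> h) x)" using x that unfolding rootsp_def by (simp add: br_sr)
    also have "\<dots> = smul (\<alpha> h) (smul c x)" by (rule V.scale_left_commute)
    finally show ?thesis .
  qed
  thus "smul c x \<in> E \<alpha>" unfolding rootsp_def by blast
qed

lemma E_br: assumes "x \<in> E \<alpha>" "y \<in> E \<beta>" shows "br x y \<in> E (\<lambda>h. \<alpha> h + \<beta> h)"
  unfolding rootsp_def
proof safe
  fix h assume h: "h \<in> H"
  have hx: "br h x = smul (\<alpha> h) x" and hy: "br h y = smul (\<beta> h) y" using assms h unfolding rootsp_def by auto
  have j: "br h (br x y) + (br x (br y h) + br y (br h x)) = 0" using jac[of h x y] by (simp add: add.assoc)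
  have p: "br x (br y h) = - smul (\<beta> h) (br x y)" using hy br_anti[of y h] by (simp add: br_negr br_sr)
  have q: "br y (br h x) = - smul (\<alpha> h) (br x y)" using hx br_anti[of y x] by (simp add: br_sr)
  have "br h (br x y) = - (br x (br y h) + br y (br h x))" using j by (simp only: eq_neg_iff_add_eq_0)
  hence "br h (br x y) = smul (\<beta> h) (br x y) + smul (\<alpha> h) (br x y)" using p q by simp
  thus "br h (br x y) = smul (\<alpha> h + \<beta> h) (br x y)" by (simp add: V.scale_left_distrib add.commute)
qed

lemma D_neg: "\<alpha> \<in> D \<Longrightarrow> (\<lambda>h. - \<alpha> h) \<in> D"
  unfolding hdual_def by (auto simp: algebra_simps)
lemma D_add: "\<alpha> \<in> D \<Longrightarrow> \<beta> \<in> D \<Longrightarrow> (\<lambda>h. \<alpha> h + \<beta> h) \<in> D"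
  unfolding hdual_def by (auto simp: algebra_simps)

lemma B_orth: assumes "\<alpha> \<in> D" "\<delta> \<in> D" "x \<in> E \<alpha>" "y \<in> E \<delta>" "(\<lambda>h. \<alpha> h + \<delta> h) \<noteq> (\<lambda>h. 0)"
  shows "B x y = 0"
proof -
  obtain h where h: "\<alpha> h + \<delta> h \<noteq> 0" using assms(5) by auto
  have hH: "h \<in> H"
  proof (rule ccontr)
    assume "h \<notin> H"
    hence "\<alpha> h = 0" "\<delta> h = 0" using assms(1,2) unfolding hdual_def by blast+
    thus False using h by simp
  qed
  have hx: "br h x = smul (\<alpha> h) x" and hy: "br h y = smul (\<delta> h) y" using assms hH unfolding rootsp_def by auto
  have "B (br x h) y = B x (br h y)" by (rule B_inv)
  hence "- (\<alpha> h * B x y) = \<delta> h * B x y" using hx hy br_anti[of x h] by (simp add: B_negl B_sl B_sr)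
  hence "\<alpha> h * B x y + \<delta> h * B x y = 0" by (simp only: neg_eq_iff_add_eq_0)
  hence "(\<alpha> h + \<delta> h) * B x y = 0" by (simp only: distrib_right)
  thus ?thesis using h by simp
qed

lemma zero_E: "0 \<in> E \<alpha>" by (rule V.subspace_0[OF E_sub])
lemma H_sub: "V.subspace H" using E_sub[of "\<lambda>_. 0"] E0 by simp

lemma root_D: "\<alpha> \<in> R \<Longrightarrow> \<alpha> \<in> D" unfolding roots_def by blast
lemma root_nz: "\<alpha> \<in> R \<Longrightarrow> \<exists>x\<in>E \<alpha>. x \<noteq> 0" unfolding roots_def using zero_E by blast
lemma notroot: "\<alpha> \<in> D \<Longrightarrow> \<alpha> \<notin> R \<Longrightarrow> x \<in> E \<alpha> \<Longrightarrow> x = 0" unfolding roots_def using zero_E by blast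

lemma pair_exists: assumes "\<alpha> \<in> D" "x \<in> E \<alpha>" "x \<noteq> 0"
  shows "\<exists>y\<in>E (\<lambda>h. - \<alpha> h). B x y \<noteq> 0"
proof -
  have "\<exists>y0. B x y0 \<noteq> 0"
  proof (rule ccontr)
    assume "\<not> (\<exists>y0. B x y0 \<noteq> 0)"
    hence "\<And>y. B x y = 0" by blast
    hence "x = 0" by (rule B_nd)
    with assms(3) show False by simp
  qed
  then obtain y0 where y0: "B x y0 \<noteq> 0" by blast
  obtain F f where F: "finite F" "F \<subseteq> D" "\<forall>\<delta>\<in>F. f \<delta> \<in> E \<delta>" "y0 = sum f F" by (rule decompE)
  have "(\<Sum>\<delta>\<in>F. B x (f \<delta>)) \<noteq> 0" using y0 by (simp add: F(4) B_sumr)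
  then obtain \<delta> where d: "\<delta> \<in> F" "B x (f \<delta>) \<noteq> 0" by (rule sum.not_neutral_contains_not_neutral)
  have "B x (f \<delta>) = 0" if ne: "(\<lambda>h. \<alpha> h + \<delta> h) \<noteq> (\<lambda>h. 0)"
  proof (rule B_orth[OF assms(1) _ assms(2) _ ne])
    show "\<delta> \<in> D" using d(1) F(2) by blast
    show "f \<delta> \<in> E \<delta>" using d(1) F(3) by blast
  qed
  hence eq: "(\<lambda>h. \<alpha> h + \<delta> h) = (\<lambda>h. 0)" using d(2) by blast
  have "\<delta> h = - \<alpha> h" for h using fun_cong[OF eq, of h] by (simp only: add_eq_0_iff)
  hence "\<delta> = (\<lambda>h. - \<alpha> h)" by (rule ext)
  moreover have "f \<delta> \<in> E \<delta>" using d(1) F(3) by blast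
  ultimately show ?thesis using d(2) by blast
qed

lemma tvec_uniq: assumes "t \<in> H" "t' \<in> H" "\<forall>h\<in>H. B h t = B h t'" shows "t = t'"
proof -
  have dH: "t - t' \<in> H" by (rule V.subspace_diff[OF H_sub assms(1,2)])
  have hd: "\<forall>h\<in>H. B h (t - t') = 0"
  proof
    fix h assume "h \<in> H"
    have "B h (t - t') = B h t + - B h t'" by (simp only: diff_conv_add_uminus B_addr B_negr)
    thus "B h (t - t') = 0" using assms(3) \<open>h \<in> H\<close> by simp
  qed
  have "B y (t - t') = 0" for y
  proof -
    obtain F f where F: "finite F" "F \<subseteq> D" "\<forall>\<delta>\<in>F. f \<delta> \<in> E \<delta>" "y = sum f F" by (rule decompE)
    have "B (f \<delta>) (t - t') = 0" if "\<delta> \<in> F" for \<delta>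
    proof (cases "\<delta> = (\<lambda>_. 0)")
      case True
      have "f \<delta> \<in> E \<delta>" using that F(3) by blast
      hence "f \<delta> \<in> H" using True E0 by simp
      thus ?thesis using hd by blast
    next
      case False
      have z: "(\<lambda>_. 0) \<in> D" unfolding hdual_def by simp
      have dE: "t - t' \<in> E (\<lambda>_. 0)" using dH E0 by simp
      have ne: "(\<lambda>h. \<delta> h + 0) \<noteq> (\<lambda>h. 0)" using False by simp
      show ?thesis by (rule B_orth[OF _ z _ dE ne]) (use that F in blast)+
    qed
    hence "(\<Sum>\<delta>\<in>F. B (f \<delta>) (t - t')) = 0" by simp
    thus ?thesis unfolding F(4) B_suml .
  qed
  hence "B (t - t') y = 0" for y using B_sym[of "t - t'" y] by simp
  hence "t - t' = 0" by (rule B_nd)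
  thus ?thesis by simp
qed

lemma tvec_form: assumes "\<alpha> \<in> R"
  shows "\<exists>x y. x \<in> E \<alpha> \<and> y \<in> E (\<lambda>h. - \<alpha> h) \<and> B x y \<noteq> 0 \<and> tvec B H \<alpha> = smul (1 / B x y) (br x y)
     \<and> tvec B H \<alpha> \<in> H \<and> (\<forall>h\<in>H. \<alpha> h = B h (tvec B H \<alpha>))"
proof -
  have aD: "\<alpha> \<in> D" using assms root_D by blast
  obtain x where x: "x \<in> E \<alpha>" "x \<noteq> 0" using root_nz assms by blast
  obtain y where y: "y \<in> E (\<lambda>h. - \<alpha> h)" "B x y \<noteq> 0" using pair_exists[OF aD x] by blast
  define t where "t = smul (1 / B x y) (br x y)"
  have "br x y \<in> E (\<lambda>h. \<alpha> h + - \<alpha> h)" by (rule E_br[OF x(1) y(1)])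
  hence "br x y \<in> H" using E0 by simp
  hence tH: "t \<in> H" unfolding t_def by (rule V.subspace_scale[OF H_sub])
  have tP: "\<forall>h\<in>H. \<alpha> h = B h t"
  proof
    fix h assume h: "h \<in> H"
    have "B h (br x y) = B (br h x) y" by (simp add: B_inv)
    also have "\<dots> = \<alpha> h * B x y" using x h unfolding rootsp_def by (simp add: B_sl)
    finally show "\<alpha> h = B h t" unfolding t_def using y(2) by (simp add: B_sr)
  qed
  have "tvec B H \<alpha> = t" unfolding tvec_def
  proof (rule the_equality)
    show "t \<in> H \<and> (\<forall>h\<in>H. \<alpha> h = B h t)" using tH tP by blast
    fix t' assume "t' \<in> H \<and> (\<forall>h\<in>H. \<alpha> h = B h t')"
    thus "t' = t" using tvec_uniq tH tP by metis
  qed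
  thus ?thesis using x y tH tP t_def by blast
qed

lemma neg_root: assumes "\<alpha> \<in> R" shows "(\<lambda>h. - \<alpha> h) \<in> R"
proof -
  have aD: "\<alpha> \<in> D" using assms root_D by blast
  obtain x where x: "x \<in> E \<alpha>" "x \<noteq> 0" using root_nz assms by blast
  obtain y where y: "y \<in> E (\<lambda>h. - \<alpha> h)" "B x y \<noteq> 0" using pair_exists[OF aD x] by blast
  have "y \<noteq> 0" using y by auto
  thus ?thesis unfolding roots_def using y D_neg[OF aD] by auto
qed

lemma neg_Rx: assumes "\<alpha> \<in> Rx" shows "(\<lambda>h. - \<alpha> h) \<in> Rx"
proof -
  have aR: "\<alpha> \<in> R" and nz: "rform B H \<alpha> \<alpha> \<noteq> 0" using assms unfolding roots_nonisotropic_def by auto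
  have nR: "(\<lambda>h. - \<alpha> h) \<in> R" using neg_root aR by blast
  obtain t1 where t1: "tvec B H \<alpha> = t1" "t1 \<in> H" "\<forall>h\<in>H. \<alpha> h = B h t1" using tvec_form[OF aR] by blast
  obtain t2 where t2: "tvec B H (\<lambda>h. - \<alpha> h) = t2" "t2 \<in> H" "\<forall>h\<in>H. - \<alpha> h = B h t2"
    using tvec_form[OF nR] by blast
  have "-t1 \<in> H" by (rule V.subspace_neg[OF H_sub t1(2)])
  hence "t2 = - t1" using tvec_uniq[OF t2(2)] t1 t2 by (simp add: B_negr)
  hence "rform B H (\<lambda>h. - \<alpha> h) (\<lambda>h. - \<alpha> h) = rform B H \<alpha> \<alpha>"
    unfolding rform_def using t1 t2 by (simp add: B_negl B_negr)
  thus ?thesis using nz nR unfolding roots_nonisotropic_def by auto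
qed

abbreviation T where "T \<equiv> (\<Union>\<alpha>\<in>Rx. E \<alpha>)"
definition G where "G = {br x y | x y. \<exists>\<beta>\<in>Rx. x \<in> E \<beta> \<and> (\<exists>\<gamma>\<in>D. y \<in> C \<inter> E \<gamma>)}"

lemma core_sub: "subalgebra smul br C"
  unfolding subalgebra_def core_def
  by (auto intro!: V.subspace_Inter simp: subalgebra_def)
lemma core_subsp: "V.subspace C" using core_sub unfolding subalgebra_def by blast
lemma core_br: "x \<in> C \<Longrightarrow> y \<in> C \<Longrightarrow> br x y \<in> C" using core_sub unfolding subalgebra_def by blast
lemma T_core: "T \<subseteq> C" unfolding core_def by blast
lemma core_min: "subalgebra smul br S \<Longrightarrow> T \<subseteq> S \<Longrightarrow> C \<subseteq> S" unfolding core_def by blast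

lemma G_core: "G \<subseteq> C" unfolding G_def using T_core core_br by blast

lemma span_core: "V.span (T \<union> G) \<subseteq> C"
proof (rule V.span_minimal[OF _ core_subsp])
  show "T \<union> G \<subseteq> C" using T_core G_core by (rule Un_least)
qed

lemma Rx_D0: "\<alpha> \<in> Rx \<Longrightarrow> \<alpha> \<in> D" unfolding roots_nonisotropic_def roots_def by blast

lemma core_span: "C = V.span (T \<union> G)"
proof (rule equalityI[OF _ span_core])
  let ?S = "V.span (T \<union> G)"
  define A where "A = {a. \<forall>s\<in>?S. br a s \<in> ?S}"
  have Asub: "V.subspace A" unfolding V.subspace_def
  proof (intro conjI ballI allI)
    show "0 \<in> A" unfolding A_def using V.span_zero by simp
  next
    fix x y assume "x \<in> A" "y \<in> A"
    thus "x + y \<in> A" unfolding A_def by (simp add: br_addl V.span_add)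
  next
    fix c x assume "x \<in> A"
    thus "smul c x \<in> A" unfolding A_def by (simp add: br_sl V.span_scale)
  qed
  have Abr: "br a b \<in> A" if ab: "a \<in> A" "b \<in> A" for a b
  proof -
    have "br (br a b) s \<in> ?S" if s: "s \<in> ?S" for s
    proof -
      have j: "br a (br b s) + br b (br s a) + br s (br a b) = 0" by (rule jac)
      have p: "br b (br s a) = - br b (br a s)" using br_anti[of s a] by (simp add: br_negr)
      have q: "br s (br a b) = - br (br a b) s" by (rule br_anti)
      have "br a (br b s) + - br b (br a s) + - br (br a b) s = 0" using j unfolding p q .
      hence "br a (br b s) + - br b (br a s) = br (br a b) s" by (simp only: add_eq_0_iff2 minus_minus)
      hence e: "br (br a b) s = br a (br b s) - br b (br a s)" by simp
      have "br b s \<in> ?S" "br a s \<in> ?S" using ab s unfolding A_def by blast+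
      hence "br a (br b s) \<in> ?S" "br b (br a s) \<in> ?S" using ab unfolding A_def by blast+
      thus ?thesis unfolding e by (rule V.span_diff)
    qed
    thus ?thesis unfolding A_def by blast
  qed
  have TA: "T \<subseteq> A"
  proof
    fix x assume "x \<in> T"
    then obtain \<beta> where b: "\<beta> \<in> Rx" "x \<in> E \<beta>" by blast
    have "br x s \<in> ?S" if "s \<in> ?S" for s
      using that
    proof (induct rule: V.span_induct)
      case base
      show ?case unfolding V.subspace_def
      proof (intro conjI ballI allI)
        show "0 \<in> {s. br x s \<in> ?S}" using V.span_zero by simp
      next
        fix u v assume "u \<in> {s. br x s \<in> ?S}" "v \<in> {s. br x s \<in> ?S}"
        thus "u + v \<in> {s. br x s \<in> ?S}" by (simp add: br_addr V.span_add)
      next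
        fix c u assume "u \<in> {s. br x s \<in> ?S}"
        thus "smul c u \<in> {s. br x s \<in> ?S}" by (simp add: br_sr V.span_scale)
      qed
    next
      case (step s)
      have "\<exists>\<gamma>\<in>D. s \<in> C \<inter> E \<gamma>"
      proof (cases "s \<in> T")
        case True
        then obtain \<gamma> where g: "\<gamma> \<in> Rx" "s \<in> E \<gamma>" by blast
        have "s \<in> C" using True T_core by blast
        thus ?thesis using g Rx_D0[OF g(1)] by blast
      next
        case False
        hence "s \<in> G" using step by blast
        then obtain x' y' \<beta>' \<gamma> where g: "s = br x' y'" "\<beta>' \<in> Rx" "x' \<in> E \<beta>'" "\<gamma> \<in> D" "y' \<in> C \<inter> E \<gamma>"
          unfolding G_def by blast
        have "s \<in> E (\<lambda>h. \<beta>' h + \<gamma> h)" unfolding g(1) using g(3) g(5) by (intro E_br) auto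
        moreover have "s \<in> C" using G_core \<open>s \<in> G\<close> by blast
        moreover have "(\<lambda>h. \<beta>' h + \<gamma> h) \<in> D" by (rule D_add[OF Rx_D0[OF g(2)] g(4)])
        ultimately show ?thesis by blast
      qed
      then obtain \<gamma> where "\<gamma> \<in> D" "s \<in> C \<inter> E \<gamma>" by blast
      hence "br x s \<in> G" unfolding G_def using b by blast
      thus ?case by (simp add: V.span_base)
    qed
    thus "x \<in> A" unfolding A_def by blast
  qed
  have sa: "subalgebra smul br A" unfolding subalgebra_def using Asub Abr by blast
  have CA: "C \<subseteq> A" by (rule core_min[OF sa TA])
  have "subalgebra smul br ?S"
    unfolding subalgebra_def
  proof (intro conjI ballI)
    show "V.subspace ?S" by (rule V.subspace_span)
    fix x y assume "x \<in> ?S" "y \<in> ?S"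
    hence "x \<in> A" using CA span_core by (meson subsetD)
    thus "br x y \<in> ?S" using \<open>y \<in> ?S\<close> unfolding A_def by blast
  qed
  moreover have "T \<subseteq> ?S" by (rule subset_trans[OF Un_upper1 V.span_superset])
  ultimately show "C \<subseteq> ?S" by (rule core_min)
qed
lemma component:
  assumes X: "\<forall>g\<in>X. wt g \<in> D \<and> g \<in> E (wt g)" and z: "z \<in> V.span X" "z \<in> E \<sigma>" and s: "\<sigma> \<in> D"
  shows "z \<in> V.span {g\<in>X. wt g = \<sigma>}"
proof -
  obtain t r where t: "finite t" "t \<subseteq> X" "z = (\<Sum>a\<in>t. smul (r a) a)"
    using z(1) unfolding V.span_explicit by blast
  define F where "F = insert \<sigma> (wt ` t)"
  define f where "f w = (\<Sum>g\<in>{g. g \<in> t \<and> wt g = w}. smul (r g) g) - (if w = \<sigma> then z else 0)" for w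
  have fF: "finite F" unfolding F_def using t by simp
  have FD: "F \<subseteq> D" unfolding F_def using t X s by auto
  have fE: "\<forall>w\<in>F. f w \<in> E w"
  proof
    fix w assume "w \<in> F"
    have "(\<Sum>g\<in>{g. g \<in> t \<and> wt g = w}. smul (r g) g) \<in> E w"
      using t X by (intro V.subspace_sum[OF E_sub]) (auto intro!: V.subspace_scale[OF E_sub])
    thus "f w \<in> E w" unfolding f_def using z(2) zero_E by (auto intro: V.subspace_diff[OF E_sub])
  qed
  have "sum f F = (\<Sum>w\<in>F. \<Sum>g\<in>{g. g \<in> t \<and> wt g = w}. smul (r g) g) - (\<Sum>w\<in>F. (if w = \<sigma> then z else 0))"
    unfolding f_def by (simp add: sum_subtractf)
  also have "(\<Sum>w\<in>F. \<Sum>g\<in>{g. g \<in> t \<and> wt g = w}. smul (r g) g) = z"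
    using t by (subst sum.group) (auto simp: F_def)
  also have "(\<Sum>w\<in>F. (if w = \<sigma> then z else 0)) = z" using fF by (simp add: F_def)
  finally have "sum f F = 0" by simp
  hence "f \<sigma> = 0" using indep[OF fF FD fE] by (simp add: F_def)
  hence "z = (\<Sum>g\<in>{g. g \<in> t \<and> wt g = \<sigma>}. smul (r g) g)" unfolding f_def by simp
  also have "\<dots> \<in> V.span {g\<in>X. wt g = \<sigma>}"
    using t by (intro V.span_sum V.span_scale V.span_base) auto
  finally show ?thesis .
qed

definition Pw where "Pw g w \<longleftrightarrow> w \<in> D \<and> g \<in> E w \<and> (w \<in> Rx \<or>
   (\<exists>\<beta>\<in>Rx. \<exists>\<gamma>\<in>D. \<exists>x y. x \<in> E \<beta> \<and> y \<in> E \<gamma> \<and> g = br x y \<and> w = (\<lambda>h. \<beta> h + \<gamma> h)))"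
definition wt where "wt g = (SOME w. Pw g w)"

lemma Rx_D: "\<alpha> \<in> Rx \<Longrightarrow> \<alpha> \<in> D" using root_D unfolding roots_nonisotropic_def by blast
lemma Rx_R: "\<alpha> \<in> Rx \<Longrightarrow> \<alpha> \<in> R" unfolding roots_nonisotropic_def by blast

lemma wt_ex: assumes "g \<in> T \<union> G" shows "Pw g (wt g)"
proof -
  have "\<exists>w. Pw g w"
  proof (cases "g \<in> T")
    case True
    then obtain \<beta> where "\<beta> \<in> Rx" "g \<in> E \<beta>" by blast
    thus ?thesis unfolding Pw_def using Rx_D by blast
  next
    case False
    hence "g \<in> G" using assms by blast
    then obtain x y \<beta> \<gamma> where g: "g = br x y" "\<beta> \<in> Rx" "x \<in> E \<beta>" "\<gamma> \<in> D" "y \<in> C \<inter> E \<gamma>"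
      unfolding G_def by blast
    have "g \<in> E (\<lambda>h. \<beta> h + \<gamma> h)" using g E_br by blast
    thus ?thesis unfolding Pw_def using g D_add Rx_D by blast
  qed
  thus ?thesis unfolding wt_def by (rule someI_ex)
qed

abbreviation K where "K \<sigma> \<equiv> V.span (\<Union>\<alpha>\<in>Rx.
          brsp smul br (E (\<lambda>h. \<alpha> h + \<sigma> h)) (E (\<lambda>h. - \<alpha> h)))"

lemma wt_K: assumes "g \<in> T \<union> G" "wt g = \<sigma>" "\<sigma> \<notin> Rx" shows "g \<in> K \<sigma>"
proof -
  obtain \<beta> \<gamma> x y where g: "\<beta> \<in> Rx" "\<gamma> \<in> D" "x \<in> E \<beta>" "y \<in> E \<gamma>" "g = br x y" "\<sigma> = (\<lambda>h. \<beta> h + \<gamma> h)"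
    using wt_ex[OF assms(1)] assms(2,3) unfolding Pw_def by blast
  define \<alpha> where "\<alpha> = (\<lambda>h. - \<beta> h)"
  have aR: "\<alpha> \<in> Rx" unfolding \<alpha>_def using neg_Rx g by blast
  have e1: "(\<lambda>h. \<alpha> h + \<sigma> h) = \<gamma>" unfolding \<alpha>_def g(6) by simp
  have e2: "(\<lambda>h. - \<alpha> h) = \<beta>" unfolding \<alpha>_def by simp
  have "br y x \<in> brsp smul br (E (\<lambda>h. \<alpha> h + \<sigma> h)) (E (\<lambda>h. - \<alpha> h))"
    unfolding brsp_def e1 e2 using g by (intro V.span_base) blast
  hence "br y x \<in> K \<sigma>" using aR by (meson UN_I V.span_base)
  hence "- br y x \<in> K \<sigma>" by (rule V.span_neg)
  thus ?thesis using g br_anti by metis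
qed

lemma K_E: assumes "\<sigma> \<in> D" shows "K \<sigma> \<subseteq> E \<sigma>"
proof (rule V.span_minimal[OF _ E_sub], safe)
  fix \<alpha> z assume a: "\<alpha> \<in> Rx" "z \<in> brsp smul br (E (\<lambda>h. \<alpha> h + \<sigma> h)) (E (\<lambda>h. - \<alpha> h))"
  have "{br x y | x y. x \<in> E (\<lambda>h. \<alpha> h + \<sigma> h) \<and> y \<in> E (\<lambda>h. - \<alpha> h)} \<subseteq> E \<sigma>"
  proof safe
    fix x y assume "x \<in> E (\<lambda>h. \<alpha> h + \<sigma> h)" "y \<in> E (\<lambda>h. - \<alpha> h)"
    hence "br x y \<in> E (\<lambda>h. (\<alpha> h + \<sigma> h) + - \<alpha> h)" by (rule E_br)
    thus "br x y \<in> E \<sigma>" by simp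
  qed
  thus "z \<in> E \<sigma>" using a(2) unfolding brsp_def using V.span_minimal[OF _ E_sub] by blast
qed

lemma cen_orth: "centre br C \<subseteq> orth B C"
proof
  fix z assume z: "z \<in> centre br C"
  have zc: "\<And>y. y \<in> C \<Longrightarrow> br z y = 0" using z unfolding centre_def by blast
  have "B z s = 0" if "s \<in> C" for s
  proof -
    have "s \<in> V.span (T \<union> G)" using that core_span by blast
    thus ?thesis
    proof (induct rule: V.span_induct)
      case base show ?case unfolding V.subspace_def by (auto simp: B_addr B_sr)
    next
      case (step g)
      show ?case
      proof (cases "g \<in> T")
        case True
        then obtain \<beta> where b: "\<beta> \<in> Rx" "g \<in> E \<beta>" by blast
        obtain x y where xy: "x \<in> E \<beta>" "y \<in> E (\<lambda>h. - \<beta> h)" "B x y \<noteq> 0"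
          "tvec B H \<beta> = smul (1 / B x y) (br x y)" "tvec B H \<beta> \<in> H" "\<forall>h\<in>H. \<beta> h = B h (tvec B H \<beta>)"
          using tvec_form[OF Rx_R[OF b(1)]] by blast
        let ?t = "tvec B H \<beta>"
        have "x \<in> C" "y \<in> C" using xy b neg_Rx T_core by blast+
        hence tC: "?t \<in> C" using xy(4) core_br core_subsp V.subspace_scale by metis
        have bt: "\<beta> ?t \<noteq> 0" using b xy(5,6) unfolding roots_nonisotropic_def rform_def by auto
        have "br ?t g = smul (\<beta> ?t) g" using b xy(5) unfolding rootsp_def by blast
        hence "B z (br ?t g) = \<beta> ?t * B z g" by (simp add: B_sr)
        moreover have "B z (br ?t g) = 0" using zc[OF tC] by (simp flip: B_inv)
        ultimately show ?thesis using bt by simp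
      next
        case False
        hence "g \<in> G" using step by blast
        then obtain x y \<beta> where g: "g = br x y" "\<beta> \<in> Rx" "x \<in> E \<beta>" unfolding G_def by blast
        have "x \<in> C" using g T_core by blast
        thus ?thesis using g zc by (simp flip: B_inv)
      qed
    qed
  qed
  thus "z \<in> orth B C" unfolding orth_def by blast
qed

lemma orth_span: assumes "\<forall>g\<in>X. B v g = 0" "s \<in> V.span X" shows "B v s = 0"
  using assms(2)
proof (induct rule: V.span_induct)
  case base show ?case unfolding V.subspace_def by (auto simp: B_addr B_sr)
next
  case (step g) thus ?case using assms(1) by blast
qed

lemma orth_comp:
  assumes z: "z \<in> orth B C" and F: "finite F" "F \<subseteq> D" "\<forall>\<delta>\<in>F. f \<delta> \<in> E \<delta>" "z = sum f F" and g: "\<gamma> \<in> F"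
  shows "f \<gamma> \<in> orth B C"
proof -
  have "B (f \<gamma>) g = 0" if gg: "g \<in> T \<union> G" for g
  proof -
    have P: "Pw g (wt g)" by (rule wt_ex[OF gg])
    hence wD: "wt g \<in> D" and gE: "g \<in> E (wt g)" unfolding Pw_def by blast+
    show ?thesis
    proof (cases "(\<lambda>h. \<gamma> h + wt g h) = (\<lambda>h. 0)")
      case False
      show ?thesis by (rule B_orth[OF _ wD _ gE False]) (use F g in blast)+
    next
      case True
      have o: "B (f \<delta>) g = 0" if "\<delta> \<in> F - {\<gamma>}" for \<delta>
      proof (rule B_orth[OF _ wD _ gE])
        show "\<delta> \<in> D" "f \<delta> \<in> E \<delta>" using that F by auto
        show "(\<lambda>h. \<delta> h + wt g h) \<noteq> (\<lambda>h. 0)"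
        proof
          assume a: "(\<lambda>h. \<delta> h + wt g h) = (\<lambda>h. 0)"
          have "\<delta> h = \<gamma> h" for h
          proof -
            have "\<delta> h + wt g h = \<gamma> h + wt g h" using fun_cong[OF a, of h] fun_cong[OF True, of h] by simp
            thus ?thesis by simp
          qed
          hence "\<delta> = \<gamma>" by (rule ext)
          thus False using that by blast
        qed
      qed
      have "B z g = (\<Sum>\<delta>\<in>F. B (f \<delta>) g)" unfolding F(4) by (rule B_suml)
      also have "\<dots> = B (f \<gamma>) g + (\<Sum>\<delta>\<in>F - {\<gamma>}. B (f \<delta>) g)" using F(1) g by (simp add: sum.remove)
      also have "(\<Sum>\<delta>\<in>F - {\<gamma>}. B (f \<delta>) g) = 0" using o by simp
      finally have "B z g = B (f \<gamma>) g" by simp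
      moreover have "g \<in> C" by (rule subsetD[OF span_core V.span_base[OF gg]])
      ultimately show ?thesis using z unfolding orth_def by auto
    qed
  qed
  hence "\<forall>g\<in>T \<union> G. B (f \<gamma>) g = 0" by blast
  moreover have "s \<in> V.span (T \<union> G)" if "s \<in> C" for s using that core_span by simp
  ultimately have "B (f \<gamma>) s = 0" if "s \<in> C" for s using orth_span that by blast
  thus ?thesis unfolding orth_def by blast
qed

lemma orth_Rx: assumes "\<gamma> \<in> Rx" "v \<in> E \<gamma>" "v \<in> orth B C" shows "v = 0"
proof (rule B_nd)
  fix y
  obtain F f where F: "finite F" "F \<subseteq> D" "\<forall>\<delta>\<in>F. f \<delta> \<in> E \<delta>" "y = sum f F" by (rule decompE)
  have "B v (f \<delta>) = 0" if "\<delta> \<in> F" for \<delta>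
  proof (cases "(\<lambda>h. \<gamma> h + \<delta> h) = (\<lambda>h. 0)")
    case False
    thus ?thesis using B_orth[OF Rx_D[OF assms(1)] _ assms(2)] F that by blast
  next
    case True
    have "\<delta> h = - \<gamma> h" for h using fun_cong[OF True, of h] by (simp only: add_eq_0_iff)
    hence "\<delta> = (\<lambda>h. - \<gamma> h)" by (rule ext)
    hence "\<delta> \<in> Rx" using neg_Rx assms by blast
    hence "f \<delta> \<in> C" using T_core F that by blast
    thus ?thesis using assms(3) unfolding orth_def by blast
  qed
  hence "(\<Sum>\<delta>\<in>F. B v (f \<delta>)) = 0" by simp
  thus "B v y = 0" unfolding F(4) B_sumr .
qed

lemma centre_sub: "V.subspace (centre br C)"
  unfolding V.subspace_def
proof (intro conjI ballI allI)
  show "0 \<in> centre br C" unfolding centre_def using V.subspace_0[OF core_subsp] by simp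
next
  fix x y assume "x \<in> centre br C" "y \<in> centre br C"
  thus "x + y \<in> centre br C" unfolding centre_def using V.subspace_add[OF core_subsp] by (simp add: br_addl)
next
  fix c x assume "x \<in> centre br C"
  thus "smul c x \<in> centre br C" unfolding centre_def using V.subspace_scale[OF core_subsp] by (simp add: br_sl)
qed

lemma main: "tame smul br B H \<longleftrightarrow>
    (\<forall>\<sigma>\<in>R0. E \<sigma> \<inter> orth B C = centre br C \<inter> K \<sigma>)"
proof
  assume tm: "tame smul br B H"
  hence oc: "orth B C = centre br C" unfolding tame_def by simp
  show "\<forall>\<sigma>\<in>R0. E \<sigma> \<inter> orth B C = centre br C \<inter> K \<sigma>"
  proof (intro ballI equalityI subsetI)
    fix \<sigma> z assume s: "\<sigma> \<in> R0" and z: "z \<in> E \<sigma> \<inter> orth B C"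
    have sD: "\<sigma> \<in> D" and snx: "\<sigma> \<notin> Rx" using s root_D unfolding roots_isotropic_def by auto
    have zC: "z \<in> centre br C" using z oc by blast
    hence "z \<in> V.span (T \<union> G)" using core_span unfolding centre_def by blast
    moreover have "\<forall>g\<in>T \<union> G. wt g \<in> D \<and> g \<in> E (wt g)"
      using wt_ex unfolding Pw_def by blast
    ultimately have "z \<in> V.span {g\<in>T \<union> G. wt g = \<sigma>}"
      using component[of "T \<union> G" wt z \<sigma>] z sD by blast
    moreover have "V.span {g\<in>T \<union> G. wt g = \<sigma>} \<subseteq> K \<sigma>"
      by (rule V.span_minimal[OF _ V.subspace_span]) (use wt_K snx in blast)
    ultimately show "z \<in> centre br C \<inter> K \<sigma>" using zC by blast
  next
    fix \<sigma> z assume s: "\<sigma> \<in> R0" and z: "z \<in> centre br C \<inter> K \<sigma>"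
    have sD: "\<sigma> \<in> D" using s root_D unfolding roots_isotropic_def by auto
    show "z \<in> E \<sigma> \<inter> orth B C" using z oc K_E[OF sD] by blast
  qed
next
  assume hyp: "\<forall>\<sigma>\<in>R0. E \<sigma> \<inter> orth B C = centre br C \<inter> K \<sigma>"
  have "orth B C \<subseteq> centre br C"
  proof
    fix z assume z: "z \<in> orth B C"
    obtain F f where F: "finite F" "F \<subseteq> D" "\<forall>\<delta>\<in>F. f \<delta> \<in> E \<delta>" "z = sum f F" by (rule decompE)
    have "f \<gamma> \<in> centre br C" if g: "\<gamma> \<in> F" for \<gamma>
    proof -
      have o: "f \<gamma> \<in> orth B C" by (rule orth_comp[OF z F g])
      have gD: "\<gamma> \<in> D" using F g by blast
      have fE: "f \<gamma> \<in> E \<gamma>" using F g by blast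
      show ?thesis
      proof (cases "\<gamma> \<in> R")
        case False
        hence "f \<gamma> = 0" using notroot gD fE by blast
        thus ?thesis using centre_sub V.subspace_0 by metis
      next
        case True
        show ?thesis
        proof (cases "\<gamma> \<in> Rx")
          case True
          hence "f \<gamma> = 0" using orth_Rx fE o by blast
          thus ?thesis using centre_sub V.subspace_0 by metis
        next
          case False
          hence "\<gamma> \<in> R0" using \<open>\<gamma> \<in> R\<close> unfolding roots_isotropic_def by blast
          thus ?thesis using hyp o fE by blast
        qed
      qed
    qed
    hence "sum f F \<in> centre br C" by (rule V.subspace_sum[OF centre_sub])
    thus "z \<in> centre br C" unfolding F(4) .
  qed
  thus "tame smul br B H" unfolding tame_def using cen_orth by blast
qed

end

theorem lemma2p7:
  fixes smul :: "complex \<Rightarrow> 'a::ab_group_add \<Rightarrow> 'a"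
    and br :: "'a \<Rightarrow> 'a \<Rightarrow> 'a"
    and B :: "'a \<Rightarrow> 'a \<Rightarrow> complex"
    and H :: "'a set"
  assumes "eala smul br B H"
  shows "tame smul br B H \<longleftrightarrow>
    (\<forall>\<sigma>\<in>roots_isotropic smul br B H.
       rootsp smul br H \<sigma> \<inter> orth B (core smul br B H) =
       centre br (core smul br B H) \<inter>
       module.span smul (\<Union>\<alpha>\<in>roots_nonisotropic smul br B H.
          brsp smul br (rootsp smul br H (\<lambda>h. \<alpha> h + \<sigma> h)) (rootsp smul br H (\<lambda>h. - \<alpha> h))))"
  using EA.main[OF EA.intro[OF assms]] .

end
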